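(* Let $G$ be a finite affine primitive permutation group with point stabilizer $H$ and minimal normal subgroup $V\cong C_p^n$, written additively as an $\mathbb F_p$-vector space. Let $h\in H$ and $v\in V$, set $w:=v^{h^{-1}}-v$ and $k:=\lceil\log_2 p\rceil$. Then the cyclic subgroup $\langle w\rangle$ is contained in a setwise product of $k+1$ conjugates of $H$.
   Context: A finite primitive permutation group $G$ is affine if it has an abelian minimal normal subgroup; this is then the unique minimal normal subgroup $V\cong C_p^n$ ($p$ prime), $G=VH$ where $H$ is a point stabilizer, and $H$ acts on $V$ by conjugation $v^{h}=h^{-1}vh$, irreducibly, as a group of linear transformations. *)

theory Defs
  imports "HOL-Algebra.Algebra" "HOL-Analysis.Analysis"
begin

definition is_block :: "('a, 'c) monoid_scheme \<Rightarrow> 'b set \<Rightarrow> ('a \<Rightarrow> 'b \<Rightarrow> 'b) \<Rightarrow> 'b set \<Rightarrow> bool" where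
  "is_block G E \<phi> B \<longleftrightarrow> B \<subseteq> E \<and>
     (\<forall>g \<in> carrier G. \<phi> g ` B = B \<or> \<phi> g ` B \<inter> B = {})"

definition primitive_action :: "('a, 'c) monoid_scheme \<Rightarrow> 'b set \<Rightarrow> ('a \<Rightarrow> 'b \<Rightarrow> 'b) \<Rightarrow> bool" where
  "primitive_action G E \<phi> \<longleftrightarrow> transitive_action G E \<phi> \<and>
     (\<forall>B. is_block G E \<phi> B \<longrightarrow> B = {} \<or> (\<exists>x. B = {x}) \<or> B = E)"

definition minimal_normal :: "'a set \<Rightarrow> ('a, 'c) monoid_scheme \<Rightarrow> bool" where
  "minimal_normal V G \<longleftrightarrow> V \<lhd> G \<and> V \<noteq> {\<one>\<^bsub>G\<^esub>} \<and>
     (\<forall>N. N \<lhd> G \<longrightarrow> N \<subseteq> V \<longrightarrow> N = {\<one>\<^bsub>G\<^esub>} \<or> N = V)"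

definition abelian_set :: "('a, 'c) monoid_scheme \<Rightarrow> 'a set \<Rightarrow> bool" where
  "abelian_set G V \<longleftrightarrow> (\<forall>x \<in> V. \<forall>y \<in> V. x \<otimes>\<^bsub>G\<^esub> y = y \<otimes>\<^bsub>G\<^esub> x)"

definition conj_set :: "('a, 'c) monoid_scheme \<Rightarrow> 'a set \<Rightarrow> 'a \<Rightarrow> 'a set" where
  "conj_set G H g = (inv\<^bsub>G\<^esub> g) <#\<^bsub>G\<^esub> H #>\<^bsub>G\<^esub> g"

fun conj_prod :: "('a, 'c) monoid_scheme \<Rightarrow> 'a set \<Rightarrow> 'a list \<Rightarrow> 'a set" where
  "conj_prod G H [] = {\<one>\<^bsub>G\<^esub>}"
| "conj_prod G H (g # gs) = conj_set G H g <#>\<^bsub>G\<^esub> conj_prod G H gs"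

end

theory Submission
  imports Defs
begin

fun TL :: "('a, 'c) monoid_scheme \<Rightarrow> 'a \<Rightarrow> nat \<Rightarrow> 'a list" where
  "TL G v 0 = []"
| "TL G v (Suc n) = v [^]\<^bsub>G\<^esub> ((2::nat)^n) # TL G v n"

lemma TL_length: "length (TL G v n) = n"
  by (induction n) auto

lemma aux1: "2*j < 2*(N::nat) \<Longrightarrow> \<not> 2*j < N \<Longrightarrow> 0 < N - j \<and> 2*(N-j) \<le> N \<and> j + (N - j) = N"
  by arith

lemma aux2: "0 < r \<Longrightarrow> 2*r \<le> 2*(N::nat) \<Longrightarrow> \<not> 2*r \<le> N \<Longrightarrow> 2*(N-r) < N \<and> r + (N-r) = N"
  by arith

locale L17 = group G for G (structure) +
  fixes V H h v
  assumes nV: "V \<lhd> G" and ab: "abelian_set G V" and sH: "subgroup H G"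
    and hH: "h \<in> H" and vV: "v \<in> V"
begin

lemma sV: "subgroup V G" by (rule normal_imp_subgroup[OF nV])
lemma VC: "x \<in> V \<Longrightarrow> x \<in> carrier G" by (rule subgroup.mem_carrier[OF sV])
lemma hC: "h \<in> carrier G" by (rule subgroup.mem_carrier[OF sH hH])
lemma vC: "v \<in> carrier G" by (rule VC[OF vV])
lemma comm: "x \<in> V \<Longrightarrow> y \<in> V \<Longrightarrow> x \<otimes> y = y \<otimes> x"
  using ab by (simp add: abelian_set_def)
lemma invV: "x \<in> V \<Longrightarrow> inv x \<in> V"
  by (rule subgroup.m_inv_closed[OF sV])
lemma mV: "x \<in> V \<Longrightarrow> y \<in> V \<Longrightarrow> x \<otimes> y \<in> V"
  by (rule subgroup.m_closed[OF sV])
lemma conjV: "x \<in> V \<Longrightarrow> h \<otimes> x \<otimes> inv h \<in> V"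
  by (rule normal.inv_op_closed2[OF nV hC])
lemma cancL [simp]: "x \<in> carrier G \<Longrightarrow> y \<in> carrier G \<Longrightarrow> inv x \<otimes> (x \<otimes> y) = y"
  by (simp add: m_assoc[symmetric])
lemma cancL2 [simp]: "x \<in> carrier G \<Longrightarrow> y \<in> carrier G \<Longrightarrow> x \<otimes> (inv x \<otimes> y) = y"
  by (simp add: m_assoc[symmetric])
lemma vpow: "v [^] (j::nat) \<in> V"
proof (induction j)
  case 0
  show ?case using subgroup.one_closed[OF sV] by simp
next
  case (Suc j)
  show ?case unfolding nat_pow_Suc by (rule mV[OF Suc.IH vV])
qed

definition W :: "nat \<Rightarrow> 'a" where
  "W j = (h \<otimes> v [^] j \<otimes> inv h) \<otimes> inv (v [^] j)"

lemma WV: "W j \<in> V"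
  unfolding W_def by (intro mV conjV invV vpow)

lemma WC: "W j \<in> carrier G" using WV VC by blast

lemma W_add: "W (a + b) = W a \<otimes> W b"
proof -
  define A where "A = h \<otimes> v [^] a \<otimes> inv h"
  define B where "B = h \<otimes> v [^] b \<otimes> inv h"
  define iA where "iA = inv (v [^] a)"
  define iB where "iB = inv (v [^] b)"
  have AV: "A \<in> V" "B \<in> V" "iA \<in> V" "iB \<in> V"
    unfolding A_def B_def iA_def iB_def by (auto intro: conjV invV vpow)
  have AC: "A \<in> carrier G" "B \<in> carrier G" "iA \<in> carrier G" "iB \<in> carrier G"
    using AV VC by auto
  have vc: "v [^] a \<in> carrier G" "v [^] b \<in> carrier G" using vpow VC by auto
  have e1: "h \<otimes> v [^] (a + b) \<otimes> inv h = A \<otimes> B"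
    unfolding A_def B_def using vc hC
    by (simp add: nat_pow_mult[symmetric, OF vC] m_assoc)
  have e2: "inv (v [^] (a + b)) = iB \<otimes> iA"
    unfolding iA_def iB_def using vc
    by (simp add: nat_pow_mult[symmetric, OF vC] inv_mult_group)
  have "W (a + b) = A \<otimes> B \<otimes> (iB \<otimes> iA)" unfolding W_def e1 e2 ..
  also have "\<dots> = A \<otimes> ((B \<otimes> iB) \<otimes> iA)" using AC by (simp add: m_assoc)
  also have "\<dots> = A \<otimes> (iA \<otimes> (B \<otimes> iB))" using comm[OF mV[OF AV(2) AV(4)] AV(3)] by simp
  also have "\<dots> = W a \<otimes> W b" unfolding W_def A_def[symmetric] B_def[symmetric]
      iA_def[symmetric] iB_def[symmetric] using AC by (simp add: m_assoc)
  finally show ?thesis .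
qed

lemma F2: "inv (v [^] a) \<otimes> h \<otimes> v [^] a = W a \<otimes> h"
proof -
  define C where "C = h \<otimes> v [^] a \<otimes> inv h"
  define D where "D = inv (v [^] a)"
  have CV: "C \<in> V" "D \<in> V" unfolding C_def D_def by (auto intro: conjV invV vpow)
  have vc: "v [^] a \<in> carrier G" using vpow VC by auto
  have CC: "C \<in> carrier G" "D \<in> carrier G" using CV VC by auto
  have "W a \<otimes> h = C \<otimes> D \<otimes> h" unfolding W_def C_def D_def ..
  also have "\<dots> = D \<otimes> C \<otimes> h" using comm[OF CV] by simp
  also have "\<dots> = D \<otimes> (h \<otimes> v [^] a)" unfolding C_def using vc hC CC
    by (simp add: m_assoc)
  finally show ?thesis unfolding D_def using vc hC by (simp add: m_assoc)
qed

lemma F3: "inv (v [^] a) \<otimes> inv h \<otimes> v [^] a = inv h \<otimes> inv (W a)"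
proof -
  have vc: "v [^] a \<in> carrier G" using vpow VC by auto
  have "inv (inv (v [^] a) \<otimes> h \<otimes> v [^] a) = inv (v [^] a) \<otimes> inv h \<otimes> v [^] a"
    using vc hC by (simp add: inv_mult_group m_assoc)
  then show ?thesis using F2[of a] hC WC by (simp add: inv_mult_group)
qed

lemma W0: "W 0 = \<one>"
  unfolding W_def using hC by simp

lemma W_pow: "W 1 [^] (j::nat) = W j"
proof (induction j)
  case 0
  show ?case using W0 by simp
next
  case (Suc j)
  have "W 1 [^] Suc j = W 1 [^] j \<otimes> W 1" by (rule nat_pow_Suc)
  also have "\<dots> = W j \<otimes> W 1" using Suc.IH by (rule arg_cong)
  also have "\<dots> = W (j + 1)" by (rule W_add[symmetric])
  finally show ?case by simp
qed

lemma mem_cs: "x \<in> H \<Longrightarrow> g \<in> carrier G \<Longrightarrow> inv g \<otimes> x \<otimes> g \<in> conj_set G H g"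
  unfolding conj_set_def r_coset_def l_coset_def by blast

lemma one_cs: "g \<in> carrier G \<Longrightarrow> \<one> \<in> conj_set G H g"
proof -
  assume g: "g \<in> carrier G"
  have "inv g \<otimes> \<one> \<otimes> g \<in> conj_set G H g"
    using mem_cs[OF subgroup.one_closed[OF sH] g] .
  then show ?thesis using g by simp
qed

lemma mem_prod: "x \<in> A \<Longrightarrow> y \<in> B \<Longrightarrow> x \<otimes> y \<in> A <#> B"
  unfolding set_mult_def by blast

lemma main:
  "(\<forall>j. 2*j < 2^n \<longrightarrow> W j \<in> conj_prod G H (TL G v n)) \<and>
   (\<forall>r. 0 < r \<and> 2*r \<le> 2^n \<longrightarrow> inv h \<otimes> inv (W r) \<in> conj_prod G H (TL G v n))"
proof (induction n)
  case 0
  show ?case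
  proof (intro conjI allI impI)
    fix j :: nat assume "2*j < 2^0"
    then have "j = 0" by simp
    then show "W j \<in> conj_prod G H (TL G v 0)" unfolding W_def using hC by simp
  next
    fix r :: nat assume "0 < r \<and> 2*r \<le> 2^0"
    then show "inv h \<otimes> inv (W r) \<in> conj_prod G H (TL G v 0)" by (simp; linarith)
  qed
next
  case (Suc n)
  note IH0 = Suc.IH[THEN conjunct1, rule_format]
  note IH1 = Suc.IH[THEN conjunct2, rule_format]
  define g where "g = v [^] ((2::nat)^n)"
  have gC: "g \<in> carrier G" unfolding g_def by (rule VC[OF vpow])
  have CP: "conj_prod G H (TL G v (Suc n)) = conj_set G H g <#> conj_prod G H (TL G v n)"
    unfolding g_def by simp
  have ihC: "inv h \<in> H" by (rule subgroup.m_inv_closed[OF sH hH])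
  show ?case unfolding CP
  proof (intro conjI allI impI)
    fix j :: nat assume j: "2*j < 2^Suc n"
    show "W j \<in> conj_set G H g <#> conj_prod G H (TL G v n)"
    proof (cases "2*j < 2^n")
      case True
      have "\<one> \<otimes> W j \<in> conj_set G H g <#> conj_prod G H (TL G v n)"
        by (intro mem_prod one_cs gC IH0 True)
      then show ?thesis using WC by simp
    next
      case False
      define r where "r = 2^n - j"
      have r: "0 < r \<and> 2*r \<le> 2^n" "j + r = 2^n" 
      proof -
        have jj: "2*j < 2*2^n" using j by simp
        from aux1[OF jj False] show "0 < r \<and> 2*r \<le> 2^n" "j + r = 2^n" unfolding r_def by blast+
      qed
      have "(inv g \<otimes> h \<otimes> g) \<otimes> (inv h \<otimes> inv (W r)) \<in> conj_set G H g <#> conj_prod G H (TL G v n)"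
        by (intro mem_prod mem_cs hH gC IH1 r)
      also have "(inv g \<otimes> h \<otimes> g) \<otimes> (inv h \<otimes> inv (W r)) = W j"
      proof -
        have "(inv g \<otimes> h \<otimes> g) \<otimes> (inv h \<otimes> inv (W r)) = W (2^n) \<otimes> h \<otimes> (inv h \<otimes> inv (W r))"
          unfolding g_def F2 ..
        also have "\<dots> = W (j + r) \<otimes> inv (W r)" using r(2) hC WC by (simp add: m_assoc)
        also have "\<dots> = W j" using W_add[of j r] WC by (simp add: m_assoc)
        finally show ?thesis .
      qed
      finally show ?thesis .
    qed
  next
    fix r :: nat assume r: "0 < r \<and> 2*r \<le> 2^Suc n"
    show "inv h \<otimes> inv (W r) \<in> conj_set G H g <#> conj_prod G H (TL G v n)"
    proof (cases "2*r \<le> 2^n")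
      case True
      have "\<one> \<otimes> (inv h \<otimes> inv (W r)) \<in> conj_set G H g <#> conj_prod G H (TL G v n)"
        using r True by (intro mem_prod one_cs gC IH1) auto
      then show ?thesis using WC hC by simp
    next
      case False
      define m where "m = 2^n - r"
      have m: "2*m < 2^n" "r + m = 2^n" 
      proof -
        have rr: "2*r \<le> 2*2^n" using r by simp
        from aux2[OF _ rr False] r show "2*m < 2^n" "r + m = 2^n" unfolding m_def by blast+
      qed
      have "(inv g \<otimes> inv h \<otimes> g) \<otimes> W m \<in> conj_set G H g <#> conj_prod G H (TL G v n)"
        by (intro mem_prod mem_cs ihC gC IH0 m)
      also have "(inv g \<otimes> inv h \<otimes> g) \<otimes> W m = inv h \<otimes> inv (W r)"
      proof -
        have "(inv g \<otimes> inv h \<otimes> g) \<otimes> W m = inv h \<otimes> inv (W (r + m)) \<otimes> W m"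
          unfolding g_def F3 m(2) ..
        also have "\<dots> = inv h \<otimes> (inv (W m) \<otimes> (inv (W r) \<otimes> W m))"
          using WC hC by (simp add: W_add inv_mult_group m_assoc)
        also have "inv (W r) \<otimes> W m = W m \<otimes> inv (W r)"
          using comm[OF invV[OF WV] WV] .
        also have "inv h \<otimes> (inv (W m) \<otimes> (W m \<otimes> inv (W r))) = inv h \<otimes> inv (W r)"
          using WC hC by (simp add: m_assoc[symmetric])
        finally show ?thesis .
      qed
      finally show ?thesis .
    qed
  qed
qed

lemma TL_carrier: "set (TL G v n) \<subseteq> carrier G"
  by (induction n) (auto simp: vC)

lemma W1: "W 1 = (h \<otimes> v \<otimes> inv h) \<otimes> inv v"
  by (simp add: W_def vC)

lemma gen_sub:
  fixes p :: nat
  assumes p: "p > 0" "W 1 [^] p = \<one>" and pk: "p \<le> 2^k"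
  shows "generate G {W 1} \<subseteq> conj_prod G H (TL G v (Suc k))"
proof
  fix x assume "x \<in> generate G {W 1}"
  then obtain i :: int where x: "x = W 1 [^] i" using generate_pow[OF WC] by blast
  define j where "j = nat (i mod int p)"
  have ij: "i = int p * (i div int p) + int j" unfolding j_def using p by simp
  have "x = W 1 [^] (int p * (i div int p)) \<otimes> W 1 [^] (int j)"
    unfolding x by (subst ij) (simp add: int_pow_mult WC)
  also have "W 1 [^] (int p * (i div int p)) = \<one>"
    using int_pow_pow[OF WC[of 1], of "int p" "i div int p"] p(2) by (simp add: int_pow_int)
  finally have "x = W j" using WC W_pow by (simp add: int_pow_int)
  moreover have "j < p" unfolding j_def using p by (simp add: nat_less_iff)
  then have "2 * j < 2 ^ Suc k" using pk by simp
  ultimately show "x \<in> conj_prod G H (TL G v (Suc k))" using main by blast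
qed

end

theorem lemma17:
  fixes G :: "('a, 'c) monoid_scheme" and \<Omega> :: "'b set" and \<phi> :: "'a \<Rightarrow> 'b \<Rightarrow> 'b"
    and \<omega> :: 'b and V :: "'a set" and p :: nat and h v :: 'a
  assumes "group G"
    and "finite \<Omega>"
    and "faithful_action G \<Omega> \<phi>"
    and "primitive_action G \<Omega> \<phi>"
    and "\<omega> \<in> \<Omega>"
    and "minimal_normal V G"
    and "abelian_set G V"
    and "Factorial_Ring.prime p"
    and "\<forall>x \<in> V. x [^]\<^bsub>G\<^esub> p = \<one>\<^bsub>G\<^esub>"
    and "h \<in> stabilizer G \<phi> \<omega>"
    and "v \<in> V"
  shows "\<exists>gs. length gs = nat \<lceil>log 2 (real p)\<rceil> + 1 \<and> set gs \<subseteq> carrier G \<and>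
           generate G {(h \<otimes>\<^bsub>G\<^esub> v \<otimes>\<^bsub>G\<^esub> inv\<^bsub>G\<^esub> h) \<otimes>\<^bsub>G\<^esub> inv\<^bsub>G\<^esub> v}
             \<subseteq> conj_prod G (stabilizer G \<phi> \<omega>) gs"
proof -
  define k where "k = nat \<lceil>log 2 (real p)\<rceil>"
  interpret grp: group G by fact
  have ga: "group_action G \<Omega> \<phi>" using assms(3) faithful_action.axioms(1) by blast
  have sH: "subgroup (stabilizer G \<phi> \<omega>) G"
    using group_action.stabilizer_subgroup[OF ga assms(5)] .
  have nV: "V \<lhd> G" using assms(6) unfolding minimal_normal_def by blast
  interpret L: L17 G V "stabilizer G \<phi> \<omega>" h v
    by (intro L17.intro L17_axioms.intro assms(1) nV assms(7) sH assms(10) assms(11))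
  have p1: "p \<ge> 2" using assms(8) prime_ge_2_nat by blast
  have lp: "log 2 (real p) \<ge> 0" using p1 by simp
  have "real k = real_of_int \<lceil>log 2 (real p)\<rceil>" unfolding k_def
    using lp by (simp add: of_nat_nat)
  then have lk: "log 2 (real p) \<le> real k" by (simp add: le_of_int_ceiling)
  have "real p = 2 powr (log 2 (real p))" using p1 by simp
  also have "\<dots> \<le> 2 powr (real k)" using lk by (intro powr_mono) auto
  also have "\<dots> = 2 ^ k" by (simp add: powr_realpow)
  finally have "real p \<le> 2 ^ k" .
  then have pk: "p \<le> 2 ^ k" by (metis of_nat_le_iff of_nat_numeral of_nat_power)
  have "L.W 1 [^]\<^bsub>G\<^esub> p = \<one>\<^bsub>G\<^esub>" using assms(9) L.WV by blast
  then have gen: "generate G {L.W 1} \<subseteq> conj_prod G (stabilizer G \<phi> \<omega>) (TL G v (Suc k))"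
    using L.gen_sub[OF _ _ pk] p1 by simp
  have w: "(h \<otimes>\<^bsub>G\<^esub> v \<otimes>\<^bsub>G\<^esub> inv\<^bsub>G\<^esub> h) \<otimes>\<^bsub>G\<^esub> inv\<^bsub>G\<^esub> v = L.W 1"
    by (rule L.W1[symmetric])
  have len: "length (TL G v (Suc k)) = k + 1" by (simp add: TL_length)
  show ?thesis unfolding k_def[symmetric] w
    using len L.TL_carrier gen by blast
qed

end
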